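(* For every real number $\kappa\ge 0$ there exists a contraction $T$ on a Hilbert space such that $\sqrt{1-TT^*}$ has finite rank and $K(T) = \kappa$. In particular, there exist (non-pure) contractions with finite-rank defect $\sqrt{1-TT^*}$ whose curvature is not an integer.
   Context: A contraction $T$ on $H$ is pure if ${T^*}^n h \to 0$ for every $h\in H$. For a contraction $T$ with $\Delta_T := \sqrt{1-TT^*}$ of finite rank, the curvature of $T$ is $$K(T) := \int_{|z|=1} \lim_{r\uparrow 1} (1-r^2)\, \operatorname{tr}\big(\Delta_T (1-rzT^* )^{-1}(1-r\bar z T)^{-1}\Delta_T\big)\, dz,$$ where $dz$ denotes normalized arc-length (Haar probability) measure on the unit circle. *)

theory Defs
  imports "HOL-Analysis.Analysis"
begin

text \<open>Concrete separable Hilbert space: complex l2 over the natural numbers.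
  Vectors are functions nat to complex; bounded operators are functions on
  such vectors, only their behaviour on l2 matters.\<close>

type_synonym vec = "nat \<Rightarrow> complex"
type_synonym op = "vec \<Rightarrow> vec"

definition l2 :: "vec set" where
  "l2 = {x. summable (\<lambda>n. (cmod (x n))\<^sup>2)}"

definition l2norm :: "vec \<Rightarrow> real" where
  "l2norm x = sqrt (\<Sum>n. (cmod (x n))\<^sup>2)"

definition l2inner :: "vec \<Rightarrow> vec \<Rightarrow> complex" where
  "l2inner x y = (\<Sum>n. x n * cnj (y n))"

definition unitvec :: "nat \<Rightarrow> vec" where
  "unitvec k = (\<lambda>m. if m = k then 1 else 0)"

definition is_bdd_op :: "op \<Rightarrow> bool" where
  "is_bdd_op T \<longleftrightarrow>
     (\<forall>x\<in>l2. T x \<in> l2) \<and>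
     (\<forall>x\<in>l2. \<forall>y\<in>l2. \<forall>a b. T (\<lambda>n. a * x n + b * y n) = (\<lambda>n. a * T x n + b * T y n)) \<and>
     (\<exists>C. \<forall>x\<in>l2. l2norm (T x) \<le> C * l2norm x)"

definition adj :: "op \<Rightarrow> op" where
  "adj T = (SOME S. is_bdd_op S \<and> (\<forall>x\<in>l2. \<forall>y\<in>l2. l2inner (T x) y = l2inner x (S y)))"

definition is_contraction :: "op \<Rightarrow> bool" where
  "is_contraction T \<longleftrightarrow> is_bdd_op T \<and> (\<forall>x\<in>l2. l2norm (T x) \<le> l2norm x)"

definition defect :: "op \<Rightarrow> op" where
  "defect T = (SOME D. is_bdd_op D \<and>
      (\<forall>x\<in>l2. \<forall>y\<in>l2. l2inner (D x) y = l2inner x (D y)) \<and>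
      (\<forall>x\<in>l2. 0 \<le> Re (l2inner (D x) x)) \<and>
      (\<forall>x\<in>l2. D (D x) = (\<lambda>n. x n - T (adj T x) n)))"

definition finite_rank :: "op \<Rightarrow> bool" where
  "finite_rank A \<longleftrightarrow> (\<exists>(k::nat) (v::nat \<Rightarrow> vec). \<forall>x\<in>l2.
      \<exists>c::nat \<Rightarrow> complex. A x = (\<lambda>m. \<Sum>i<k. c i * v i m))"

definition pure :: "op \<Rightarrow> bool" where
  "pure T \<longleftrightarrow> (\<forall>h\<in>l2. (\<lambda>n. l2norm ((adj T ^^ n) h)) \<longlonglongrightarrow> 0)"

definition op_inv :: "op \<Rightarrow> op" where
  "op_inv A = (SOME B. is_bdd_op B \<and> (\<forall>x\<in>l2. A (B x) = x \<and> B (A x) = x))"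

definition trace_op :: "op \<Rightarrow> complex" where
  "trace_op A = (\<Sum>n. A (unitvec n) n)"

definition curv_integrand :: "op \<Rightarrow> complex \<Rightarrow> real \<Rightarrow> complex" where
  "curv_integrand T z r =
     (let D = defect T;
          R1 = op_inv (\<lambda>x n. x n - (complex_of_real r * z) * adj T x n);
          R2 = op_inv (\<lambda>x n. x n - (complex_of_real r * cnj z) * T x n)
      in complex_of_real (1 - r\<^sup>2) * trace_op (\<lambda>x. D (R1 (R2 (D x)))))"

definition curvature_defined :: "op \<Rightarrow> bool" where
  "curvature_defined T \<longleftrightarrow> (\<exists>k N. negligible N \<and>
      (\<forall>t\<in>{0..2*pi} - N. ((\<lambda>r. curv_integrand T (cis t) r) \<longlongrightarrow> k t) (at_left 1)) \<and>
      k integrable_on {0..2*pi})"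

definition curvature :: "op \<Rightarrow> complex" where
  "curvature T = integral {0..2*pi} (\<lambda>t. Lim (at_left 1) (\<lambda>r. curv_integrand T (cis t) r))
                 / complex_of_real (2*pi)"

end

theory Submission
  imports Defs "HOL-Library.Nat_Bijection"
begin

lemma reindex_nonneg:
  fixes f :: "nat \<Rightarrow> real"
  assumes "summable f" "\<And>n. 0 \<le> f n" "inj g"
  shows "summable (\<lambda>n. f (g n))" "(\<Sum>n. f (g n)) \<le> suminf f"
proof -
  have b: "(\<Sum>n<N. f (g n)) \<le> suminf f" for N
  proof -
    have "(\<Sum>n<N. f (g n)) = sum f (g ` {..<N})"
      using assms(3) by (simp add: sum.reindex inj_on_subset)
    also have "\<dots> \<le> suminf f" by (rule sum_le_suminf) (use assms in auto)
    finally show ?thesis .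
  qed
  show s: "summable (\<lambda>n. f (g n))" by (rule summableI_nonneg_bounded[where x="suminf f"]) (use assms b in auto)
  show "(\<Sum>n. f (g n)) \<le> suminf f" using suminf_le_const[OF s b] .
qed

lemma reindex_bij:
  fixes f :: "nat \<Rightarrow> complex"
  assumes "summable (\<lambda>n. norm (f n))" "bij g"
  shows "(\<Sum>n. f (g n)) = suminf f"
proof -
  have s2: "summable (\<lambda>n. norm (f (g n)))"
    using reindex_nonneg(1)[OF assms(1) _ bij_is_inj[OF assms(2)]] by simp
  have h1: "(f has_sum suminf f) UNIV"
    by (rule norm_summable_imp_has_sum[OF assms(1) summable_sums[OF summable_norm_cancel[OF assms(1)]]])
  have h2: "((\<lambda>n. f (g n)) has_sum (\<Sum>n. f (g n))) UNIV"
    by (rule norm_summable_imp_has_sum[OF s2 summable_sums[OF summable_norm_cancel[OF s2]]])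
  have "infsum (\<lambda>n. f (g n)) UNIV = infsum f UNIV"
    by (rule infsum_reindex_bij_betw[OF assms(2)])
  then show ?thesis using infsumI[OF h1] infsumI[OF h2] by simp
qed

lemma l2_coord_le: "x \<in> l2 \<Longrightarrow> (cmod (x j))\<^sup>2 \<le> (\<Sum>n. (cmod (x n))\<^sup>2)"
  unfolding l2_def using sum_le_suminf[of "\<lambda>n. (cmod (x n))\<^sup>2" "{j}"] by auto

lemma l2_coord_le': "x \<in> l2 \<Longrightarrow> cmod (x j) \<le> l2norm x"
  unfolding l2norm_def using l2_coord_le[of x j] real_le_rsqrt by blast

lemma ab_le: fixes a b :: real shows "a * b \<le> (a\<^sup>2 + b\<^sup>2) / 2"
  using sum_squares_bound[of a b] by simp

lemma l2_inner_summable: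
  assumes "x \<in> l2" "y \<in> l2"
  shows "summable (\<lambda>n. norm (x n * cnj (y n)))"
proof (rule summable_comparison_test)
  show "summable (\<lambda>n. ((cmod (x n))\<^sup>2 + (cmod (y n))\<^sup>2) / 2)"
    using assms unfolding l2_def by (intro summable_divide summable_add) auto
  show "\<exists>N. \<forall>n\<ge>N. norm (norm (x n * cnj (y n))) \<le> ((cmod (x n))\<^sup>2 + (cmod (y n))\<^sup>2) / 2"
  proof (intro exI allI impI)
    fix n
    have "norm (norm (x n * cnj (y n))) = cmod (x n) * cmod (y n)"
      by (simp add: norm_mult)
    then show "norm (norm (x n * cnj (y n))) \<le> ((cmod (x n))\<^sup>2 + (cmod (y n))\<^sup>2) / 2"
      using ab_le[of "cmod (x n)" "cmod (y n)"] by simp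
  qed
qed

lemma l2_inner_self:
  assumes "y \<in> l2" shows "l2inner y y = of_real (\<Sum>n. (cmod (y n))\<^sup>2)"
proof -
  have e: "y n * cnj (y n) = of_real ((cmod (y n))\<^sup>2)" for n
    by (rule complex_norm_square[symmetric])
  have "l2inner y y = (\<Sum>n. of_real ((cmod (y n))\<^sup>2))"
    unfolding l2inner_def e by simp
  also have "\<dots> = of_real (\<Sum>n. (cmod (y n))\<^sup>2)"
    using assms unfolding l2_def by (simp add: suminf_of_real)
  finally show ?thesis .
qed

lemma l2_zero_norm:
  assumes "y \<in> l2" "(\<Sum>n. (cmod (y n))\<^sup>2) = 0" shows "y = (\<lambda>n. 0)"
  using assms suminf_eq_zero_iff[of "\<lambda>n. (cmod (y n))\<^sup>2"] unfolding l2_def by auto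

lemma l2_inner_scale:
  assumes "y \<in> l2" "z \<in> l2" shows "l2inner (\<lambda>n. a * y n) z = a * l2inner y z"
  unfolding l2inner_def
  using suminf_mult[OF summable_norm_cancel[OF l2_inner_summable[OF assms]], of a]
  by (simp add: mult.assoc)

lemma l2_inner_zero: "l2inner u (\<lambda>n. 0) = 0"
  unfolding l2inner_def by simp

lemma l2_zero: "(\<lambda>n. 0) \<in> l2" unfolding l2_def by simp

lemma l2_scale: "x \<in> l2 \<Longrightarrow> (\<lambda>n. a * x n) \<in> l2"
  unfolding l2_def by (simp add: norm_mult power_mult_distrib summable_mult)

lemma sq_sum_ident: "((a::real) + b)\<^sup>2 + (a - b)\<^sup>2 = 2 * a\<^sup>2 + 2 * b\<^sup>2"
  by (simp add: power2_eq_square algebra_simps)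

lemma l2_add: assumes "x \<in> l2" "y \<in> l2" shows "(\<lambda>n. x n + y n) \<in> l2"
proof -
  have s: "summable (\<lambda>n. 2 * (cmod (x n))\<^sup>2 + 2 * (cmod (y n))\<^sup>2)"
    using assms unfolding l2_def by (intro summable_add summable_mult) auto
  have b: "norm ((cmod (x n + y n))\<^sup>2) \<le> 2 * (cmod (x n))\<^sup>2 + 2 * (cmod (y n))\<^sup>2" for n
  proof -
    have "cmod (x n + y n) \<le> cmod (x n) + cmod (y n)" by (rule norm_triangle_ineq)
    then have "(cmod (x n + y n))\<^sup>2 \<le> (cmod (x n) + cmod (y n))\<^sup>2" by (rule power_mono) auto
    moreover have "0 \<le> (cmod (x n) - cmod (y n))\<^sup>2" by simp
    moreover have "norm ((cmod (x n + y n))\<^sup>2) = (cmod (x n + y n))\<^sup>2" by simp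
    ultimately show ?thesis using sq_sum_ident[of "cmod (x n)" "cmod (y n)"] by linarith
  qed
  have "summable (\<lambda>n. (cmod (x n + y n))\<^sup>2)"
    by (rule summable_comparison_test'[OF s b])
  then show ?thesis by (simp only: l2_def mem_Collect_eq)
qed

lemma l2_diff: assumes "x \<in> l2" "y \<in> l2" shows "(\<lambda>n. x n - y n) \<in> l2"
proof -
  have "(\<lambda>n. x n + (-1) * y n) \<in> l2" by (rule l2_add[OF assms(1) l2_scale[OF assms(2)]])
  moreover have "(\<lambda>n. x n + (-1) * y n) = (\<lambda>n. x n - y n)" by (rule ext) simp
  ultimately show ?thesis by simp
qed

lemma unitvec_l2: "unitvec k \<in> l2"
proof -
  have "summable (\<lambda>n. (cmod (unitvec k n))\<^sup>2)"
    by (rule summable_finite[of "{k}"]) (auto simp: unitvec_def)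
  then show ?thesis unfolding l2_def by simp
qed

lemma inner_unitvec: "l2inner (unitvec k) v = cnj (v k)"
  unfolding l2inner_def by (subst suminf_finite[of "{k}"]) (auto simp: unitvec_def)

lemma bdd_op_l2: "is_bdd_op A \<Longrightarrow> x \<in> l2 \<Longrightarrow> A x \<in> l2"
  unfolding is_bdd_op_def by blast

lemma bdd_op_lin: "is_bdd_op A \<Longrightarrow> x \<in> l2 \<Longrightarrow> y \<in> l2 \<Longrightarrow>
   A (\<lambda>n. a * x n + b * y n) = (\<lambda>n. a * A x n + b * A y n)"
  unfolding is_bdd_op_def by blast

lemma bdd_op_scale: assumes "is_bdd_op A" "x \<in> l2" shows "A (\<lambda>n. a * x n) = (\<lambda>n. a * A x n)"
  using bdd_op_lin[OF assms assms(2), of a 0] by simp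

lemma bdd_op_diff: assumes "is_bdd_op A" "x \<in> l2" "y \<in> l2" shows "A (\<lambda>n. x n - y n) = (\<lambda>n. A x n - A y n)"
  using bdd_op_lin[OF assms, of 1 "-1"] by simp

lemma bdd_op_zero: assumes "is_bdd_op A" shows "A (\<lambda>n. 0) = (\<lambda>n. 0)"
  using bdd_op_scale[OF assms l2_zero, of 0] by simp

lemma cs_weighted:
  fixes r :: real and a :: "nat \<Rightarrow> real"
  assumes r: "0 \<le> r" and a: "\<And>k. 0 \<le> a k"
  shows "(\<Sum>k<K. r^k * a k)\<^sup>2 \<le> (\<Sum>k<K. r^k) * (\<Sum>k<K. r^k * (a k)\<^sup>2)"
proof -
  define f where "f k = sqrt (r^k)" for k
  define h where "h k = sqrt (r^k) * a k" for k
  have fsq: "(f k)\<^sup>2 = r^k" for k unfolding f_def using r by simp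
  have hsq: "(h k)\<^sup>2 = r^k * (a k)\<^sup>2" for k unfolding h_def using r by (simp add: power_mult_distrib)
  have e: "r^k * a k = \<bar>f k\<bar> * \<bar>h k\<bar>" for k
  proof -
    have "\<bar>f k\<bar> * \<bar>h k\<bar> = sqrt (r^k) * sqrt (r^k) * a k"
      unfolding f_def h_def using r a[of k] by (simp add: abs_mult)
    also have "\<dots> = r^k * a k" using r by simp
    finally show ?thesis by simp
  qed
  have "(\<Sum>k<K. r^k * a k) = (\<Sum>k<K. \<bar>f k\<bar> * \<bar>h k\<bar>)" using e by simp
  also have "\<dots> \<le> L2_set f {..<K} * L2_set h {..<K}" by (rule L2_set_mult_ineq)
  finally have le: "(\<Sum>k<K. r^k * a k) \<le> L2_set f {..<K} * L2_set h {..<K}" .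
  have nn: "0 \<le> (\<Sum>k<K. r^k * a k)" using r a by (intro sum_nonneg) simp
  have "(\<Sum>k<K. r^k * a k)\<^sup>2 \<le> (L2_set f {..<K} * L2_set h {..<K})\<^sup>2"
    by (rule power_mono[OF le nn])
  also have "\<dots> = (L2_set f {..<K})\<^sup>2 * (L2_set h {..<K})\<^sup>2" by (simp add: power_mult_distrib)
  also have "(L2_set f {..<K})\<^sup>2 = (\<Sum>k<K. r^k)"
    unfolding L2_set_def using fsq r by (simp add: sum_nonneg)
  also have "(L2_set h {..<K})\<^sup>2 = (\<Sum>k<K. r^k * (a k)\<^sup>2)"
    unfolding L2_set_def using hsq r by (simp add: sum_nonneg)
  finally show ?thesis .
qed

definition wc :: "(nat \<Rightarrow> complex) \<Rightarrow> (nat \<Rightarrow> nat) \<Rightarrow> op" where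
  "wc g p x = (\<lambda>n. g n * x (p n))"

lemma wc_l2:
  assumes p: "inj p" and g: "\<And>n. cmod (g n) \<le> 1" and x: "x \<in> l2"
  shows "wc g p x \<in> l2" "(\<Sum>n. (cmod (wc g p x n))\<^sup>2) \<le> (\<Sum>n. (cmod (x n))\<^sup>2)"
proof -
  have sx: "summable (\<lambda>n. (cmod (x n))\<^sup>2)" using x unfolding l2_def by simp
  have s1: "summable (\<lambda>n. (cmod (x (p n)))\<^sup>2)" and l1: "(\<Sum>n. (cmod (x (p n)))\<^sup>2) \<le> (\<Sum>n. (cmod (x n))\<^sup>2)"
    using reindex_nonneg[OF sx _ p] by auto
  have b: "norm ((cmod (wc g p x n))\<^sup>2) \<le> (cmod (x (p n)))\<^sup>2" for n
  proof -
    have "cmod (wc g p x n) \<le> cmod (x (p n))"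
      unfolding wc_def norm_mult using g[of n] mult_right_mono[of "cmod (g n)" 1 "cmod (x (p n))"] by simp
    then show ?thesis by (simp add: power_mono)
  qed
  have s2: "summable (\<lambda>n. (cmod (wc g p x n))\<^sup>2)" by (rule summable_comparison_test'[OF s1 b])
  then show "wc g p x \<in> l2" by (simp only: l2_def mem_Collect_eq)
  have "(\<Sum>n. (cmod (wc g p x n))\<^sup>2) \<le> (\<Sum>n. (cmod (x (p n)))\<^sup>2)"
    by (rule suminf_le[OF _ s2 s1]) (use b in simp)
  then show "(\<Sum>n. (cmod (wc g p x n))\<^sup>2) \<le> (\<Sum>n. (cmod (x n))\<^sup>2)" using l1 by linarith
qed

lemma wc_bdd:
  assumes p: "inj p" and g: "\<And>n. cmod (g n) \<le> 1"
  shows "is_bdd_op (wc g p)" "\<And>x. x \<in> l2 \<Longrightarrow> l2norm (wc g p x) \<le> l2norm x"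
proof -
  show n: "l2norm (wc g p x) \<le> l2norm x" if "x \<in> l2" for x
    unfolding l2norm_def using wc_l2[OF p g that] by simp
  show "is_bdd_op (wc g p)"
    unfolding is_bdd_op_def
  proof (intro conjI ballI allI exI)
    show "wc g p x \<in> l2" if "x \<in> l2" for x using wc_l2[OF p g that] by simp
    show "wc g p (\<lambda>n. a * x n + b * y n) = (\<lambda>n. a * wc g p x n + b * wc g p y n)" for x y a b
      unfolding wc_def by (simp add: algebra_simps)
    show "l2norm (wc g p x) \<le> 1 * l2norm x" if "x \<in> l2" for x using n[OF that] by simp
  qed
qed

definition GG :: "(nat \<Rightarrow> complex) \<Rightarrow> (nat \<Rightarrow> nat) \<Rightarrow> nat \<Rightarrow> nat \<Rightarrow> complex" where
  "GG g p k n = (\<Prod>i<k. g ((p^^i) n))"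

definition NB :: "complex \<Rightarrow> (nat \<Rightarrow> complex) \<Rightarrow> (nat \<Rightarrow> nat) \<Rightarrow> op" where
  "NB \<mu> g p x n = (\<Sum>k. \<mu>^k * GG g p k n * x ((p^^k) n))"

lemma GG_Suc1: "GG g p (Suc k) n = g n * GG g p k (p n)"
  unfolding GG_def by (subst prod.lessThan_Suc_shift) (simp add: funpow_Suc_right del: funpow.simps)

lemma GG_Suc2: "GG g p (Suc k) n = GG g p k n * g ((p^^k) n)"
  unfolding GG_def by simp

lemma GG_norm: assumes "\<And>n. cmod (g n) \<le> 1" shows "cmod (GG g p k n) \<le> 1"
  unfolding GG_def prod_norm[symmetric] by (rule prod_le_1) (use assms in auto)

locale nb =
  fixes \<mu> :: complex and g :: "nat \<Rightarrow> complex" and p :: "nat \<Rightarrow> nat"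
  assumes p: "inj p" and g: "\<And>n. cmod (g n) \<le> 1" and mu: "cmod \<mu> < 1"
begin

lemma term_bound:
  assumes x: "x \<in> l2"
  shows "norm (\<mu>^k * GG g p k n * x ((p^^k) n)) \<le> (cmod \<mu>)^k * cmod (x ((p^^k) n))"
proof -
  have "norm (\<mu>^k * GG g p k n * x ((p^^k) n)) = (cmod \<mu>)^k * cmod (GG g p k n) * cmod (x ((p^^k) n))"
    by (simp add: norm_mult norm_power)
  also have "\<dots> \<le> (cmod \<mu>)^k * 1 * cmod (x ((p^^k) n))"
    by (intro mult_right_mono mult_left_mono GG_norm g) auto
  finally show ?thesis by simp
qed

lemma geo_summable: "summable (\<lambda>k. (cmod \<mu>)^k * c)"
  by (intro summable_mult2 summable_geometric) (use mu in simp)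

lemma NB_summable:
  assumes x: "x \<in> l2"
  shows "summable (\<lambda>k. norm (\<mu>^k * GG g p k n * x ((p^^k) n)))"
proof (rule summable_comparison_test'[OF geo_summable[of "l2norm x"]])
  fix k
  have "norm (\<mu>^k * GG g p k n * x ((p^^k) n)) \<le> (cmod \<mu>)^k * cmod (x ((p^^k) n))" by (rule term_bound[OF x])
  also have "\<dots> \<le> (cmod \<mu>)^k * l2norm x" by (intro mult_left_mono l2_coord_le'[OF x]) auto
  finally show "norm (norm (\<mu>^k * GG g p k n * x ((p^^k) n))) \<le> (cmod \<mu>)^k * l2norm x" by simp
qed

lemma NB_summable': "x \<in> l2 \<Longrightarrow> summable (\<lambda>k. \<mu>^k * GG g p k n * x ((p^^k) n))"
  by (rule summable_norm_cancel[OF NB_summable])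

lemma NB_l2:
  assumes x: "x \<in> l2"
  shows "NB \<mu> g p x \<in> l2" "l2norm (NB \<mu> g p x) \<le> (1 / (1 - cmod \<mu>)) * l2norm x"
proof -
  define r where "r = cmod \<mu>"
  define X where "X = (\<Sum>n. (cmod (x n))\<^sup>2)"
  define a where "a k n = cmod (x ((p^^k) n))" for k n
  have r0: "0 \<le> r" and r1: "r < 1" unfolding r_def using mu by auto
  have sx: "summable (\<lambda>n. (cmod (x n))\<^sup>2)" using x unfolding l2_def by simp
  have X0: "0 \<le> X" unfolding X_def by (rule suminf_nonneg[OF sx]) simp
  have a0: "0 \<le> a k n" for k n unfolding a_def by simp
  have aX: "(a k n)\<^sup>2 \<le> X" for k n unfolding a_def X_def by (rule l2_coord_le[OF x])
  have geo: "summable (\<lambda>k. r^k * c)" for c unfolding r_def by (rule geo_summable)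
  have sa: "summable (\<lambda>k. r^k * a k n)" for n
  proof (rule summable_comparison_test'[OF geo[of "l2norm x"]])
    fix k show "norm (r^k * a k n) \<le> r^k * l2norm x"
      unfolding a_def using r0 l2_coord_le'[OF x] by (simp add: mult_left_mono)
  qed
  have sa2: "summable (\<lambda>k. r^k * (a k n)\<^sup>2)" for n
  proof (rule summable_comparison_test'[OF geo[of X]])
    fix k show "norm (r^k * (a k n)\<^sup>2) \<le> r^k * X"
      using r0 aX[of k n] by (simp add: mult_left_mono)
  qed
  have sumr: "(\<Sum>k<K. r^k) \<le> 1 / (1 - r)" for K
  proof -
    have "(\<Sum>k<K. r^k) \<le> (\<Sum>k. r^k)"
      by (rule sum_le_suminf) (use r0 r1 in \<open>auto intro: summable_geometric\<close>)
    also have "\<dots> = 1 / (1 - r)" by (rule suminf_geometric) (use r0 r1 in simp)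
    finally show ?thesis .
  qed
  define b where "b n = (\<Sum>k. r^k * a k n)" for n
  have NBb: "cmod (NB \<mu> g p x n) \<le> b n" for n
  proof -
    have "cmod (NB \<mu> g p x n) \<le> (\<Sum>k. norm (\<mu>^k * GG g p k n * x ((p^^k) n)))"
      unfolding NB_def by (rule summable_norm[OF NB_summable[OF x]])
    also have "\<dots> \<le> b n" unfolding b_def
      by (rule suminf_le[OF _ NB_summable[OF x] sa]) (use term_bound[OF x] in \<open>simp add: r_def a_def\<close>)
    finally show ?thesis .
  qed
  have b0: "0 \<le> b n" for n unfolding b_def by (rule suminf_nonneg[OF sa]) (use r0 a0 in simp)
  have bCS: "(b n)\<^sup>2 \<le> 1 / (1 - r) * (\<Sum>k. r^k * (a k n)\<^sup>2)" for n
  proof -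
    have lim: "(\<lambda>K. (\<Sum>k<K. r^k * a k n)\<^sup>2) \<longlonglongrightarrow> (b n)\<^sup>2"
      unfolding b_def by (intro tendsto_power summable_LIMSEQ sa)
    have "(\<Sum>k<K. r^k * a k n)\<^sup>2 \<le> 1 / (1 - r) * (\<Sum>k. r^k * (a k n)\<^sup>2)" for K
    proof -
      have "(\<Sum>k<K. r^k * a k n)\<^sup>2 \<le> (\<Sum>k<K. r^k) * (\<Sum>k<K. r^k * (a k n)\<^sup>2)"
        by (rule cs_weighted[OF r0 a0])
      also have "\<dots> \<le> 1 / (1 - r) * (\<Sum>k. r^k * (a k n)\<^sup>2)"
      proof (rule mult_mono[OF sumr])
        show "(\<Sum>k<K. r^k * (a k n)\<^sup>2) \<le> (\<Sum>k. r^k * (a k n)\<^sup>2)"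
          by (rule sum_le_suminf[OF sa2]) (use r0 in auto)
        show "0 \<le> 1 / (1 - r)" using r1 by simp
        show "0 \<le> (\<Sum>k<K. r^k * (a k n)\<^sup>2)" using r0 by (intro sum_nonneg) simp
      qed
      finally show ?thesis .
    qed
    then show ?thesis by (intro LIMSEQ_le_const2[OF lim]) auto
  qed
  have inner: "(\<Sum>n<N. (a k n)\<^sup>2) \<le> X" for k N
  proof -
    have i: "inj (p^^k)" using p by simp
    have "(\<Sum>n<N. (a k n)\<^sup>2) \<le> (\<Sum>n. (a k n)\<^sup>2)"
      unfolding a_def by (rule sum_le_suminf[OF reindex_nonneg(1)[OF sx _ i]]) auto
    also have "\<dots> \<le> X" unfolding a_def X_def by (rule reindex_nonneg(2)[OF sx _ i]) auto
    finally show ?thesis .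
  qed
  have partial: "(\<Sum>n<N. (cmod (NB \<mu> g p x n))\<^sup>2) \<le> X / (1 - r)\<^sup>2" for N
  proof -
    have "(\<Sum>n<N. (cmod (NB \<mu> g p x n))\<^sup>2) \<le> (\<Sum>n<N. 1 / (1 - r) * (\<Sum>k. r^k * (a k n)\<^sup>2))"
    proof (rule sum_mono)
      fix n
      have "(cmod (NB \<mu> g p x n))\<^sup>2 \<le> (b n)\<^sup>2" using NBb[of n] by (simp add: power_mono)
      then show "(cmod (NB \<mu> g p x n))\<^sup>2 \<le> 1 / (1 - r) * (\<Sum>k. r^k * (a k n)\<^sup>2)" using bCS[of n] by linarith
    qed
    also have "\<dots> = 1 / (1 - r) * (\<Sum>n<N. \<Sum>k. r^k * (a k n)\<^sup>2)" by (simp add: sum_distrib_left)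
    finally have A1: "(\<Sum>n<N. (cmod (NB \<mu> g p x n))\<^sup>2) \<le> 1 / (1 - r) * (\<Sum>n<N. \<Sum>k. r^k * (a k n)\<^sup>2)" .
    have "(\<Sum>n<N. \<Sum>k. r^k * (a k n)\<^sup>2) = (\<Sum>k. \<Sum>n<N. r^k * (a k n)\<^sup>2)"
      by (rule suminf_sum[symmetric]) (rule sa2)
    also have "\<dots> = (\<Sum>k. r^k * (\<Sum>n<N. (a k n)\<^sup>2))" by (simp add: sum_distrib_left)
    also have "\<dots> \<le> (\<Sum>k. r^k * X)"
    proof (rule suminf_le)
      show "r^k * (\<Sum>n<N. (a k n)\<^sup>2) \<le> r^k * X" for k using inner[of k N] r0 by (simp add: mult_left_mono)
      show "summable (\<lambda>k. r^k * X)" by (rule geo)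
      show "summable (\<lambda>k. r^k * (\<Sum>n<N. (a k n)\<^sup>2))"
      proof (rule summable_comparison_test'[OF geo[of X]])
        fix k show "norm (r^k * (\<Sum>n<N. (a k n)\<^sup>2)) \<le> r^k * X"
          using inner[of k N] r0 by (simp add: abs_mult sum_nonneg mult_left_mono)
      qed
    qed
    also have "(\<Sum>k. r^k * X) = X / (1 - r)"
      using suminf_mult2[OF summable_geometric[of r]] suminf_geometric[of r] r0 r1 by simp
    finally have A2: "(\<Sum>n<N. \<Sum>k. r^k * (a k n)\<^sup>2) \<le> X / (1 - r)" .
    have "(\<Sum>n<N. (cmod (NB \<mu> g p x n))\<^sup>2) \<le> 1 / (1 - r) * (X / (1 - r))"
      using A1 mult_left_mono[OF A2, of "1 / (1 - r)"] r1 by simp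
    then show ?thesis by (simp add: power2_eq_square)
  qed
  have sNB: "summable (\<lambda>n. (cmod (NB \<mu> g p x n))\<^sup>2)"
    by (rule summableI_nonneg_bounded[OF _ partial]) simp
  then show "NB \<mu> g p x \<in> l2" by (simp only: l2_def mem_Collect_eq)
  have "(\<Sum>n. (cmod (NB \<mu> g p x n))\<^sup>2) \<le> X / (1 - r)\<^sup>2" by (rule suminf_le_const[OF sNB partial])
  then have "l2norm (NB \<mu> g p x) \<le> sqrt (X / (1 - r)\<^sup>2)" unfolding l2norm_def by simp
  also have "sqrt (X / (1 - r)\<^sup>2) = sqrt X / (1 - r)" using r1 by (simp add: real_sqrt_divide)
  also have "\<dots> = (1 / (1 - r)) * l2norm x" unfolding l2norm_def X_def by simp
  finally show "l2norm (NB \<mu> g p x) \<le> (1 / (1 - cmod \<mu>)) * l2norm x" unfolding r_def .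
qed

end

context nb begin

lemma NB_lin:
  assumes x: "x \<in> l2" and y: "y \<in> l2"
  shows "NB \<mu> g p (\<lambda>n. a * x n + b * y n) = (\<lambda>n. a * NB \<mu> g p x n + b * NB \<mu> g p y n)"
proof (rule ext)
  fix n
  have e: "\<mu>^k * GG g p k n * (a * x ((p^^k) n) + b * y ((p^^k) n)) =
      a * (\<mu>^k * GG g p k n * x ((p^^k) n)) + b * (\<mu>^k * GG g p k n * y ((p^^k) n))" for k
    by (simp add: algebra_simps)
  have sx: "summable (\<lambda>k. a * (\<mu>^k * GG g p k n * x ((p^^k) n)))"
    by (rule summable_mult[OF NB_summable'[OF x]])
  have sy: "summable (\<lambda>k. b * (\<mu>^k * GG g p k n * y ((p^^k) n)))"
    by (rule summable_mult[OF NB_summable'[OF y]])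
  show "NB \<mu> g p (\<lambda>n. a * x n + b * y n) n = a * NB \<mu> g p x n + b * NB \<mu> g p y n"
    unfolding NB_def e
    by (simp add: suminf_add[OF sx sy, symmetric] suminf_mult[OF NB_summable'[OF x]] suminf_mult[OF NB_summable'[OF y]])
qed

lemma NB_bdd: "is_bdd_op (NB \<mu> g p)"
  unfolding is_bdd_op_def
proof (intro conjI ballI allI exI)
  show "NB \<mu> g p x \<in> l2" if "x \<in> l2" for x using NB_l2[OF that] by simp
  show "NB \<mu> g p (\<lambda>n. a * x n + b * y n) = (\<lambda>n. a * NB \<mu> g p x n + b * NB \<mu> g p y n)"
    if "x \<in> l2" "y \<in> l2" for x y a b using NB_lin[OF that] .
  show "l2norm (NB \<mu> g p x) \<le> (1 / (1 - cmod \<mu>)) * l2norm x" if "x \<in> l2" for x using NB_l2[OF that] by simp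
qed

lemma NB_right:
  assumes x: "x \<in> l2"
  shows "(\<lambda>n. NB \<mu> g p x n - \<mu> * wc g p (NB \<mu> g p x) n) = x"
proof (rule ext)
  fix n
  define f where "f k = \<mu>^k * GG g p k n * x ((p^^k) n)" for k
  have sf: "summable f" unfolding f_def by (rule NB_summable'[OF x])
  have "\<mu> * wc g p (NB \<mu> g p x) n = \<mu> * g n * (\<Sum>k. \<mu>^k * GG g p k (p n) * x ((p^^k) (p n)))"
    unfolding wc_def NB_def by simp
  also have "\<dots> = (\<Sum>k. \<mu> * g n * (\<mu>^k * GG g p k (p n) * x ((p^^k) (p n))))"
    by (rule suminf_mult[symmetric]) (rule NB_summable'[OF x])
  also have "\<dots> = (\<Sum>k. f (Suc k))"
    unfolding f_def GG_Suc1 by (simp add: funpow_Suc_right mult_ac del: funpow.simps)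
  also have "\<dots> = suminf f - f 0" by (rule suminf_split_head[OF sf])
  also have "f 0 = x n" unfolding f_def GG_def by simp
  also have "suminf f = NB \<mu> g p x n" unfolding f_def NB_def by simp
  finally show "NB \<mu> g p x n - \<mu> * wc g p (NB \<mu> g p x) n = x n" by simp
qed

lemma NB_left:
  assumes x: "x \<in> l2"
  shows "NB \<mu> g p (\<lambda>n. x n - \<mu> * wc g p x n) = x"
proof (rule ext)
  fix n
  define f where "f k = \<mu>^k * GG g p k n * x ((p^^k) n)" for k
  have f0: "f \<longlonglongrightarrow> 0"
  proof -
    have s: "summable (\<lambda>k. norm (f k))" unfolding f_def by (rule NB_summable[OF x])
    have "(\<lambda>k. norm (f k)) \<longlonglongrightarrow> 0" by (rule summable_LIMSEQ_zero[OF s])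
    then show ?thesis by (simp add: tendsto_norm_zero_iff)
  qed
  have e: "\<mu>^k * GG g p k n * (x ((p^^k) n) - \<mu> * wc g p x ((p^^k) n)) = f k - f (Suc k)" for k
    unfolding f_def wc_def GG_Suc2 by (simp add: algebra_simps)
  have "(\<lambda>k. f k - f (Suc k)) sums (f 0 - 0)" by (rule telescope_sums'[OF f0])
  then have "(\<Sum>k. f k - f (Suc k)) = x n" unfolding f_def GG_def by (simp add: sums_iff)
  then show "NB \<mu> g p (\<lambda>n. x n - \<mu> * wc g p x n) n = x n"
    unfolding NB_def e by simp
qed

lemma op_inv_NB:
  assumes A: "\<And>y. y \<in> l2 \<Longrightarrow> A y = (\<lambda>n. y n - \<mu> * wc g p y n)" and x: "x \<in> l2"
  shows "op_inv A x = NB \<mu> g p x"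
proof -
  have P: "is_bdd_op (NB \<mu> g p) \<and> (\<forall>x\<in>l2. A (NB \<mu> g p x) = x \<and> NB \<mu> g p (A x) = x)"
  proof (intro conjI ballI NB_bdd)
    fix x assume x: "x \<in> l2"
    have "NB \<mu> g p x \<in> l2" by (rule NB_l2(1)[OF x])
    then show "A (NB \<mu> g p x) = x" using A NB_right[OF x] by simp
    show "NB \<mu> g p (A x) = x" using A[OF x] NB_left[OF x] by simp
  qed
  define B where "B = op_inv A"
  have PB: "is_bdd_op B \<and> (\<forall>x\<in>l2. A (B x) = x \<and> B (A x) = x)"
    unfolding B_def op_inv_def by (rule someI[where x="NB \<mu> g p"]) (rule P)
  have l: "NB \<mu> g p x \<in> l2" by (rule NB_l2(1)[OF x])
  have "B x = B (A (NB \<mu> g p x))" using P x by simp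
  also have "\<dots> = NB \<mu> g p x" using PB l by simp
  finally show ?thesis unfolding B_def .
qed

end

definition proj :: "(nat \<Rightarrow> bool) \<Rightarrow> op" where
  "proj C x = (\<lambda>n. if C n then x n else 0)"

lemma proj_wc: "proj C x = wc (\<lambda>n. if C n then 1 else 0) id x"
  unfolding proj_def wc_def by auto

lemma proj_l2: "x \<in> l2 \<Longrightarrow> proj C x \<in> l2"
  unfolding proj_wc by (rule wc_l2(1)) auto

lemma zero_of_sq_zero:
  assumes bd: "is_bdd_op D" and sa: "\<forall>x\<in>l2. \<forall>y\<in>l2. l2inner (D x) y = l2inner x (D y)"
    and w: "w \<in> l2" and z: "D (D w) = (\<lambda>n. 0)"
  shows "D w = (\<lambda>n. 0)"
proof -
  have Dw: "D w \<in> l2" by (rule bdd_op_l2[OF bd w])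
  have "l2inner (D w) (D w) = l2inner w (D (D w))" using sa w Dw by blast
  also have "\<dots> = 0" unfolding z by (rule l2_inner_zero)
  finally have "of_real (\<Sum>n. (cmod (D w n))\<^sup>2) = (0::complex)" using l2_inner_self[OF Dw] by simp
  then have "(\<Sum>n. (cmod (D w n))\<^sup>2) = 0" by simp
  then show ?thesis by (rule l2_zero_norm[OF Dw])
qed

lemma defect_unique:
  fixes D :: op and s :: real
  assumes bd: "is_bdd_op D"
   and sa: "\<forall>x\<in>l2. \<forall>y\<in>l2. l2inner (D x) y = l2inner x (D y)"
   and ps: "\<forall>x\<in>l2. 0 \<le> Re (l2inner (D x) x)"
   and sq: "\<forall>x\<in>l2. D (D x) = (\<lambda>n. (complex_of_real s)\<^sup>2 * proj C x n)"
   and s: "0 \<le> s"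
   and x: "x \<in> l2"
  shows "D x = (\<lambda>n. complex_of_real s * proj C x n)"
proof -
  define u where "u = (\<lambda>n. x n - proj C x n)"
  define v where "v = proj C x"
  have ul: "u \<in> l2" unfolding u_def by (rule l2_diff[OF x proj_l2[OF x]])
  have vl: "v \<in> l2" unfolding v_def by (rule proj_l2[OF x])
  have Pu: "proj C u = (\<lambda>n. 0)" unfolding u_def proj_def by auto
  have Pv: "proj C v = v" unfolding v_def proj_def by auto
  have Du: "D u = (\<lambda>n. 0)"
    by (rule zero_of_sq_zero[OF bd sa ul]) (use sq ul Pu in simp)
  have Dv: "D v = (\<lambda>n. complex_of_real s * v n)"
  proof (cases "s = 0")
    case True
    have "D v = (\<lambda>n. 0)"
      by (rule zero_of_sq_zero[OF bd sa vl]) (use sq vl True in simp)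
    then show ?thesis using True by simp
  next
    case False
    then have s0: "0 < s" using s by simp
    define y where "y = (\<lambda>n. 1 * D v n + (- complex_of_real s) * v n)"
    have Dvl: "D v \<in> l2" by (rule bdd_op_l2[OF bd vl])
    have yl: "y \<in> l2" unfolding y_def by (rule l2_add[OF l2_scale[OF Dvl] l2_scale[OF vl]])
    have "D y = (\<lambda>n. 1 * D (D v) n + (- complex_of_real s) * D v n)"
      unfolding y_def by (rule bdd_op_lin[OF bd Dvl vl])
    also have "\<dots> = (\<lambda>n. (- complex_of_real s) * y n)"
      using sq vl Pv unfolding y_def by (auto simp: power2_eq_square algebra_simps)
    finally have Dy: "D y = (\<lambda>n. (- complex_of_real s) * y n)" .
    define Y where "Y = (\<Sum>n. (cmod (y n))\<^sup>2)"
    have Y0: "0 \<le> Y" unfolding Y_def using yl unfolding l2_def by (simp add: suminf_nonneg)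
    have "l2inner (D y) y = (- complex_of_real s) * l2inner y y"
      unfolding Dy by (rule l2_inner_scale[OF yl yl])
    also have "\<dots> = complex_of_real (- s * Y)" unfolding l2_inner_self[OF yl] Y_def by simp
    finally have "0 \<le> - s * Y" using ps yl by force
    then have "Y = 0" using s0 Y0 by (simp add: mult_le_0_iff)
    then have "y = (\<lambda>n. 0)" using l2_zero_norm[OF yl] unfolding Y_def by simp
    then have y0: "y = (\<lambda>n. 0)" .
    have "D v n - complex_of_real s * v n = 0" for n using fun_cong[OF y0, of n] unfolding y_def by simp
    then show ?thesis by (intro ext) simp
  qed
  have xe: "x = (\<lambda>n. 1 * v n + 1 * u n)" unfolding u_def v_def by simp
  have "D x = (\<lambda>n. 1 * D v n + 1 * D u n)" by (subst xe, rule bdd_op_lin[OF bd vl ul])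
  also have "\<dots> = (\<lambda>n. complex_of_real s * v n)" by (simp add: Du Dv)
  finally show ?thesis unfolding v_def .
qed

definition wt :: "nat \<Rightarrow> real \<Rightarrow> int \<Rightarrow> real" where
  "wt m c i = (if - int m \<le> i \<and> i < 0 then c else 1)"
definition p1 :: "nat \<Rightarrow> nat \<Rightarrow> nat" where "p1 m n = int_encode (int_decode n + int m)"
definition p2 :: "nat \<Rightarrow> nat \<Rightarrow> nat" where "p2 m n = int_encode (int_decode n - int m)"
definition g1 :: "nat \<Rightarrow> real \<Rightarrow> nat \<Rightarrow> complex" where "g1 m c n = complex_of_real (wt m c (int_decode n))"
definition g2 :: "nat \<Rightarrow> real \<Rightarrow> nat \<Rightarrow> complex" where "g2 m c n = complex_of_real (wt m c (int_decode n - int m))"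
definition CC :: "nat \<Rightarrow> nat \<Rightarrow> bool" where "CC m n = (0 \<le> int_decode n \<and> int_decode n < int m)"
definition TT :: "nat \<Rightarrow> real \<Rightarrow> op" where "TT m c = wc (g2 m c) (p2 m)"
definition TS :: "nat \<Rightarrow> real \<Rightarrow> op" where "TS m c = wc (g1 m c) (p1 m)"
definition DD :: "nat \<Rightarrow> real \<Rightarrow> op" where "DD m s x = (\<lambda>n. complex_of_real s * proj (CC m) x n)"

lemma p1_p2[simp]: "p1 m (p2 m n) = n" "p2 m (p1 m n) = n"
  unfolding p1_def p2_def by simp_all

lemma dec_p[simp]: "int_decode (p1 m n) = int_decode n + int m" "int_decode (p2 m n) = int_decode n - int m"
  unfolding p1_def p2_def by simp_all

lemma p_inj: "inj (p1 m)" "inj (p2 m)"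
  unfolding inj_def p1_def p2_def by (auto simp: int_encode_eq int_decode_eq)

lemma p1_bij: "bij (p1 m)"
proof (rule bijI[OF p_inj(1)])
  show "surj (p1 m)" unfolding surj_def by (metis p1_p2(1))
qed

lemma p1_pow: "(p1 m ^^ k) n = int_encode (int_decode n + int k * int m)"
  by (induction k) (simp_all add: p1_def algebra_simps)

lemma p2_pow: "(p2 m ^^ k) n = int_encode (int_decode n - int k * int m)"
  by (induction k) (simp_all add: p2_def algebra_simps)

lemma wt_bound: "0 \<le> c \<Longrightarrow> c \<le> 1 \<Longrightarrow> 0 \<le> wt m c i \<and> wt m c i \<le> 1"
  unfolding wt_def by auto

lemma g_bound: assumes "0 \<le> c" "c \<le> 1" shows "cmod (g1 m c n) \<le> 1" "cmod (g2 m c n) \<le> 1"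
  unfolding g1_def g2_def using wt_bound[OF assms] by auto

lemma TT_bdd: "0 \<le> c \<Longrightarrow> c \<le> 1 \<Longrightarrow> is_bdd_op (TT m c)"
  unfolding TT_def by (rule wc_bdd(1)[OF p_inj(2) g_bound(2)])

lemma TS_bdd: "0 \<le> c \<Longrightarrow> c \<le> 1 \<Longrightarrow> is_bdd_op (TS m c)"
  unfolding TS_def by (rule wc_bdd(1)[OF p_inj(1) g_bound(1)])

lemma TT_adj:
  assumes c: "0 \<le> c" "c \<le> 1" and x: "x \<in> l2" and y: "y \<in> l2"
  shows "l2inner (TT m c x) y = l2inner x (TS m c y)"
proof -
  have Tx: "TT m c x \<in> l2" by (rule bdd_op_l2[OF TT_bdd[OF c] x])
  have s: "summable (\<lambda>n. norm (TT m c x n * cnj (y n)))" by (rule l2_inner_summable[OF Tx y])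
  have "l2inner (TT m c x) y = (\<Sum>n. TT m c x (p1 m n) * cnj (y (p1 m n)))"
    unfolding l2inner_def by (rule reindex_bij[OF s p1_bij, symmetric])
  also have "\<dots> = l2inner x (TS m c y)"
    unfolding l2inner_def TT_def TS_def wc_def g1_def g2_def
    by (intro arg_cong[where f=suminf] ext) (simp add: mult_ac)
  finally show ?thesis .
qed

lemma adj_TT:
  assumes c: "0 \<le> c" "c \<le> 1" and y: "y \<in> l2"
  shows "adj (TT m c) y = TS m c y"
proof -
  define S where "S = adj (TT m c)"
  have P: "is_bdd_op (TS m c) \<and> (\<forall>x\<in>l2. \<forall>y\<in>l2. l2inner (TT m c x) y = l2inner x (TS m c y))"
    using TS_bdd[OF c] TT_adj[OF c] by blast
  have PS: "is_bdd_op S \<and> (\<forall>x\<in>l2. \<forall>y\<in>l2. l2inner (TT m c x) y = l2inner x (S y))"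
    unfolding S_def adj_def by (rule someI[where x="TS m c"]) (rule P)
  have "cnj (S y k) = cnj (TS m c y k)" for k
  proof -
    have "cnj (S y k) = l2inner (unitvec k) (S y)" by (simp add: inner_unitvec)
    also have "\<dots> = l2inner (TT m c (unitvec k)) y" using PS unitvec_l2 y by simp
    also have "\<dots> = l2inner (unitvec k) (TS m c y)" using P unitvec_l2 y by simp
    also have "\<dots> = cnj (TS m c y k)" by (simp add: inner_unitvec)
    finally show ?thesis .
  qed
  then show ?thesis unfolding S_def by (intro ext) simp
qed

lemma defect_sq:
  assumes "s\<^sup>2 = 1 - c\<^sup>2"
  shows "(\<lambda>n. x n - TT m c (TS m c x) n) = (\<lambda>n. (complex_of_real s)\<^sup>2 * proj (CC m) x n)"
proof (rule ext)
  fix n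
  have e1: "TT m c (TS m c x) n = complex_of_real ((wt m c (int_decode n - int m))\<^sup>2) * x n"
    unfolding TT_def TS_def wc_def g1_def g2_def by (simp add: power2_eq_square)
  have e2: "1 - (wt m c (int_decode n - int m))\<^sup>2 = (if CC m n then s\<^sup>2 else 0)"
    unfolding wt_def CC_def using assms by auto
  have "x n - TT m c (TS m c x) n = complex_of_real (1 - (wt m c (int_decode n - int m))\<^sup>2) * x n"
    unfolding e1 of_real_diff by (simp add: algebra_simps)
  also have "\<dots> = (complex_of_real s)\<^sup>2 * proj (CC m) x n"
    unfolding e2 proj_def by simp
  finally show "x n - TT m c (TS m c x) n = (complex_of_real s)\<^sup>2 * proj (CC m) x n" .
qed

lemma DD_wc: "DD m s x = wc (\<lambda>n. if CC m n then complex_of_real s else 0) id x"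
  unfolding DD_def wc_def proj_def by auto

lemma DD_bdd: assumes "0 \<le> s" "s \<le> 1" shows "is_bdd_op (DD m s)"
proof -
  have "DD m s = wc (\<lambda>n. if CC m n then complex_of_real s else 0) id"
    by (intro ext) (simp add: DD_wc)
  moreover have "is_bdd_op (wc (\<lambda>n. if CC m n then complex_of_real s else 0) id)"
    by (rule wc_bdd(1)) (use assms in auto)
  ultimately show ?thesis by simp
qed

lemma DD_sa: "l2inner (DD m s x) y = l2inner x (DD m s y)"
  unfolding l2inner_def DD_def proj_def
  by (intro arg_cong[where f=suminf] ext) (simp add: mult_ac)

lemma DD_pos: assumes s: "0 \<le> s" "s \<le> 1" and x: "x \<in> l2" shows "0 \<le> Re (l2inner (DD m s x) x)"
proof -
  define f where "f n = (if CC m n then s * (cmod (x n))\<^sup>2 else 0)" for n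
  have sx: "summable (\<lambda>n. (cmod (x n))\<^sup>2)" using x unfolding l2_def by simp
  have sf: "summable f"
  proof (rule summable_comparison_test'[OF sx])
    fix n show "norm (f n) \<le> (cmod (x n))\<^sup>2"
      unfolding f_def using s mult_right_mono[of s 1 "(cmod (x n))\<^sup>2"] by auto
  qed
  have e: "DD m s x n * cnj (x n) = complex_of_real (f n)" for n
    unfolding DD_def proj_def f_def using complex_norm_square[of "x n"] by (simp add: mult.assoc)
  have "l2inner (DD m s x) x = complex_of_real (suminf f)"
    unfolding l2inner_def e by (rule suminf_of_real[OF sf, symmetric])
  moreover have "0 \<le> suminf f" by (rule suminf_nonneg[OF sf]) (use s in \<open>simp add: f_def\<close>)
  ultimately show ?thesis by simp
qed

lemma DD_sq: "DD m s (DD m s x) = (\<lambda>n. (complex_of_real s)\<^sup>2 * proj (CC m) x n)"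
  unfolding DD_def proj_def by (auto simp: power2_eq_square)

locale params =
  fixes m :: nat and c s :: real
  assumes c0: "0 \<le> c" and c1: "c \<le> 1" and s0: "0 \<le> s" and s1: "s \<le> 1" and cs: "s\<^sup>2 = 1 - c\<^sup>2"
begin

lemma defect_eq: assumes x: "x \<in> l2" shows "defect (TT m c) x = DD m s x"
proof -
  let ?P = "\<lambda>D. is_bdd_op D \<and>
      (\<forall>x\<in>l2. \<forall>y\<in>l2. l2inner (D x) y = l2inner x (D y)) \<and>
      (\<forall>x\<in>l2. 0 \<le> Re (l2inner (D x) x)) \<and>
      (\<forall>x\<in>l2. D (D x) = (\<lambda>n. x n - TT m c (adj (TT m c) x) n))"
  have sq: "DD m s (DD m s x) = (\<lambda>n. x n - TT m c (adj (TT m c) x) n)" if "x \<in> l2" for x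
    unfolding DD_sq adj_TT[OF c0 c1 that] defect_sq[OF cs] ..
  have P: "?P (DD m s)"
    using DD_bdd[OF s0 s1] DD_sa DD_pos[OF s0 s1] sq by blast
  define D where "D = defect (TT m c)"
  have PD: "?P D" unfolding D_def defect_def by (rule someI[where x="DD m s"]) (rule P)
  have sqD: "\<forall>x\<in>l2. D (D x) = (\<lambda>n. (complex_of_real s)\<^sup>2 * proj (CC m) x n)"
  proof
    fix x assume x: "x \<in> l2"
    have "D (D x) = (\<lambda>n. x n - TT m c (adj (TT m c) x) n)" using PD x by blast
    also have "\<dots> = (\<lambda>n. (complex_of_real s)\<^sup>2 * proj (CC m) x n)"
      unfolding adj_TT[OF c0 c1 x] defect_sq[OF cs] ..
    finally show "D (D x) = (\<lambda>n. (complex_of_real s)\<^sup>2 * proj (CC m) x n)" .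
  qed
  have "D x = (\<lambda>n. complex_of_real s * proj (CC m) x n)"
    by (rule defect_unique[OF _ _ _ sqD s0 x]) (use PD in blast)+
  then show ?thesis unfolding D_def DD_def .
qed

end

lemma GG1_one: assumes "0 \<le> int_decode n" shows "GG (g1 m c) (p1 m) k n = 1"
  unfolding GG_def g1_def p1_pow
proof (intro prod.neutral ballI)
  fix l assume "l \<in> {..<k}"
  have "0 \<le> int l * int m" by simp
  then have "0 \<le> int_decode n + int l * int m" using assms by linarith
  then show "complex_of_real (wt m c (int_decode (int_encode (int_decode n + int l * int m)))) = 1"
    by (simp add: wt_def)
qed

lemma GG2_one:
  assumes "0 \<le> i" shows "GG (g2 m c) (p2 m) k (int_encode (i + int k * int m)) = 1"
  unfolding GG_def g2_def p2_pow
proof (intro prod.neutral ballI)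
  fix l assume l: "l \<in> {..<k}"
  then have "int l + 1 \<le> int k" by simp
  then have "(int l + 1) * int m \<le> int k * int m" by (simp add: mult_right_mono)
  then have "0 \<le> i + int k * int m - int l * int m - int m" using assms by (simp add: algebra_simps)
  then show "complex_of_real (wt m c (int_decode (int_encode (int_decode (int_encode (i + int k * int m)) - int l * int m)) - int m)) = 1"
    by (simp add: wt_def)
qed

lemma NB2_unit:
  assumes m: "0 < m" and i: "0 \<le> int_decode n"
  shows "NB \<mu> (g2 m c) (p2 m) (unitvec n) ((p1 m ^^ k) n) = \<mu>^k"
proof -
  define i where "i = int_decode n"
  have q: "(p1 m ^^ k) n = int_encode (i + int k * int m)" unfolding p1_pow i_def ..
  have iff: "(p2 m ^^ k') (int_encode (i + int k * int m)) = n \<longleftrightarrow> k' = k" for k'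
  proof -
    have "(p2 m ^^ k') (int_encode (i + int k * int m)) = int_encode (i + int k * int m - int k' * int m)"
      unfolding p2_pow by simp
    also have "\<dots> = n \<longleftrightarrow> i + int k * int m - int k' * int m = i"
      unfolding i_def by (metis int_decode_inverse int_encode_inverse)
    also have "\<dots> \<longleftrightarrow> int k * int m = int k' * int m" by simp
    also have "\<dots> \<longleftrightarrow> k' = k" using m by auto
    finally show ?thesis .
  qed
  have "NB \<mu> (g2 m c) (p2 m) (unitvec n) (int_encode (i + int k * int m))
      = (\<Sum>k'\<in>{k}. \<mu>^k' * GG (g2 m c) (p2 m) k' (int_encode (i + int k * int m)) *
            unitvec n ((p2 m ^^ k') (int_encode (i + int k * int m))))"
    unfolding NB_def by (rule suminf_finite) (auto simp: unitvec_def iff)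
  also have "\<dots> = \<mu>^k" using GG2_one[of i m c k] i iff[of k] unfolding i_def by (simp add: unitvec_def)
  finally show ?thesis unfolding q .
qed

lemma NB_comp:
  assumes m: "0 < m" and i: "0 \<le> int_decode n"
  shows "NB \<mu>1 (g1 m c) (p1 m) (NB \<mu>2 (g2 m c) (p2 m) (unitvec n)) n = (\<Sum>k. (\<mu>1 * \<mu>2)^k)"
  unfolding NB_def[of \<mu>1] NB2_unit[OF m i] GG1_one[OF i] by (simp add: power_mult_distrib)

context params begin

lemma integrand:
  assumes m: "0 < m" and r: "0 < r" "r < 1" and z: "cmod z = 1"
  shows "curv_integrand (TT m c) z r = complex_of_real (real m * s\<^sup>2)"
proof -
  define \<mu>1 where "\<mu>1 = complex_of_real r * z"
  define \<mu>2 where "\<mu>2 = complex_of_real r * cnj z"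
  have mu1: "cmod \<mu>1 < 1" unfolding \<mu>1_def using r z by (simp add: norm_mult)
  have mu2: "cmod \<mu>2 < 1" unfolding \<mu>2_def using r z by (simp add: norm_mult)
  interpret n1: nb \<mu>1 "g1 m c" "p1 m" by unfold_locales (use p_inj g_bound[OF c0 c1] mu1 in auto)
  interpret n2: nb \<mu>2 "g2 m c" "p2 m" by unfold_locales (use p_inj g_bound[OF c0 c1] mu2 in auto)
  define D' where "D' = defect (TT m c)"
  define R1 where "R1 = op_inv (\<lambda>x n. x n - \<mu>1 * adj (TT m c) x n)"
  define R2 where "R2 = op_inv (\<lambda>x n. x n - \<mu>2 * TT m c x n)"
  have curv: "curv_integrand (TT m c) z r = complex_of_real (1 - r\<^sup>2) * trace_op (\<lambda>x. D' (R1 (R2 (D' x))))"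
    unfolding curv_integrand_def Let_def D'_def R1_def R2_def \<mu>1_def \<mu>2_def by simp
  have R1eq: "R1 x = NB \<mu>1 (g1 m c) (p1 m) x" if "x \<in> l2" for x
    unfolding R1_def by (rule n1.op_inv_NB[OF _ that]) (simp add: adj_TT[OF c0 c1] TS_def)
  have R2eq: "R2 x = NB \<mu>2 (g2 m c) (p2 m) x" if "x \<in> l2" for x
    unfolding R2_def by (rule n2.op_inv_NB[OF _ that]) (simp add: TT_def)
  have Deq: "D' x = DD m s x" if "x \<in> l2" for x unfolding D'_def by (rule defect_eq[OF that])
  have prod: "\<mu>1 * \<mu>2 = complex_of_real (r\<^sup>2)"
  proof -
    have "z * cnj z = 1" using complex_norm_square[of z] z by simp
    then show ?thesis unfolding \<mu>1_def \<mu>2_def by (simp add: power2_eq_square mult_ac)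
  qed
  have geo: "(\<Sum>k. (\<mu>1 * \<mu>2)^k) = complex_of_real (1 / (1 - r\<^sup>2))"
  proof -
    have "r * r < 1" using mult_strict_mono[of r 1 r 1] r by simp
    then have rr: "r\<^sup>2 < 1" by (simp add: power2_eq_square)
    have "norm (complex_of_real (r\<^sup>2)) = r\<^sup>2" by (simp only: norm_of_real abs_power2)
    then have "norm (complex_of_real (r\<^sup>2)) < 1" using rr by simp
    then have "(\<Sum>k. (complex_of_real (r\<^sup>2))^k) = 1 / (1 - complex_of_real (r\<^sup>2))" by (rule suminf_geometric)
    then show ?thesis unfolding prod by simp
  qed
  have trm: "D' (R1 (R2 (D' (unitvec n)))) n = (if CC m n then complex_of_real (s\<^sup>2 / (1 - r\<^sup>2)) else 0)" for n
  proof -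
    have en: "unitvec n \<in> l2" by (rule unitvec_l2)
    have l0: "DD m s (unitvec n) \<in> l2" by (rule bdd_op_l2[OF DD_bdd[OF s0 s1] en])
    have l1: "NB \<mu>2 (g2 m c) (p2 m) (DD m s (unitvec n)) \<in> l2" by (rule n2.NB_l2(1)[OF l0])
    have l2': "NB \<mu>1 (g1 m c) (p1 m) (NB \<mu>2 (g2 m c) (p2 m) (DD m s (unitvec n))) \<in> l2" by (rule n1.NB_l2(1)[OF l1])
    have "D' (R1 (R2 (D' (unitvec n)))) n = DD m s (NB \<mu>1 (g1 m c) (p1 m) (NB \<mu>2 (g2 m c) (p2 m) (DD m s (unitvec n)))) n"
      using Deq[OF en] R2eq[OF l0] R1eq[OF l1] Deq[OF l2'] by simp
    also have "\<dots> = (if CC m n then complex_of_real (s\<^sup>2 / (1 - r\<^sup>2)) else 0)"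
    proof (cases "CC m n")
      case False then show ?thesis by (simp add: DD_def proj_def)
    next
      case True
      have i: "0 \<le> int_decode n" using True unfolding CC_def by simp
      have e0: "DD m s (unitvec n) = (\<lambda>k. complex_of_real s * unitvec n k)"
        using True by (auto simp: DD_def proj_def unitvec_def)
      have e1: "NB \<mu>2 (g2 m c) (p2 m) (\<lambda>k. complex_of_real s * unitvec n k) =
          (\<lambda>k. complex_of_real s * NB \<mu>2 (g2 m c) (p2 m) (unitvec n) k)"
        by (rule bdd_op_scale[OF n2.NB_bdd en])
      have e2: "NB \<mu>1 (g1 m c) (p1 m) (\<lambda>k. complex_of_real s * NB \<mu>2 (g2 m c) (p2 m) (unitvec n) k) =
          (\<lambda>k. complex_of_real s * NB \<mu>1 (g1 m c) (p1 m) (NB \<mu>2 (g2 m c) (p2 m) (unitvec n)) k)"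
        by (rule bdd_op_scale[OF n1.NB_bdd n2.NB_l2(1)[OF en]])
      have "DD m s (NB \<mu>1 (g1 m c) (p1 m) (NB \<mu>2 (g2 m c) (p2 m) (DD m s (unitvec n)))) n
          = complex_of_real s * (complex_of_real s * (\<Sum>k. (\<mu>1 * \<mu>2)^k))"
        unfolding e0 e1 e2 using True by (simp add: DD_def proj_def NB_comp[OF m i])
      also have "\<dots> = complex_of_real (s\<^sup>2 / (1 - r\<^sup>2))" unfolding geo by (simp add: power2_eq_square)
      finally show ?thesis using True by simp
    qed
    finally show ?thesis .
  qed
  have setC: "{n. CC m n} = int_encode ` {0..<int m}"
  proof (intro set_eqI iffI)
    fix n assume "n \<in> {n. CC m n}"
    then have "int_decode n \<in> {0..<int m}" unfolding CC_def by simp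
    then show "n \<in> int_encode ` {0..<int m}" by (metis image_eqI int_decode_inverse)
  next
    fix n assume "n \<in> int_encode ` {0..<int m}"
    then show "n \<in> {n. CC m n}" unfolding CC_def by auto
  qed
  have cardC: "card {n. CC m n} = m"
    unfolding setC by (subst card_image) (auto simp: inj_int_encode)
  have finC: "finite {n. CC m n}" unfolding setC by simp
  have "trace_op (\<lambda>x. D' (R1 (R2 (D' x)))) = (\<Sum>n\<in>{n. CC m n}. complex_of_real (s\<^sup>2 / (1 - r\<^sup>2)))"
    unfolding trace_op_def trm
  proof -
    have "(\<Sum>n. if CC m n then complex_of_real (s\<^sup>2 / (1 - r\<^sup>2)) else 0) =
       (\<Sum>n\<in>{n. CC m n}. if CC m n then complex_of_real (s\<^sup>2 / (1 - r\<^sup>2)) else 0)"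
      by (rule suminf_finite[OF finC]) simp
    also have "\<dots> = (\<Sum>n\<in>{n. CC m n}. complex_of_real (s\<^sup>2 / (1 - r\<^sup>2)))"
      by (rule sum.cong) auto
    finally show "(\<Sum>n. if CC m n then complex_of_real (s\<^sup>2 / (1 - r\<^sup>2)) else 0) =
       (\<Sum>n\<in>{n. CC m n}. complex_of_real (s\<^sup>2 / (1 - r\<^sup>2)))" .
  qed
  also have "\<dots> = of_nat m * complex_of_real (s\<^sup>2 / (1 - r\<^sup>2))" using cardC by simp
  finally have tr: "trace_op (\<lambda>x. D' (R1 (R2 (D' x)))) = of_nat m * complex_of_real (s\<^sup>2 / (1 - r\<^sup>2))" .
  have "r * r < 1" using mult_strict_mono[of r 1 r 1] r by simp
  then have r2: "1 - r\<^sup>2 \<noteq> 0" by (simp add: power2_eq_square)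
  have re: "(1 - r\<^sup>2) * (real m * (s\<^sup>2 / (1 - r\<^sup>2))) = real m * s\<^sup>2" using r2 by simp
  have "complex_of_real (1 - r\<^sup>2) * (of_nat m * complex_of_real (s\<^sup>2 / (1 - r\<^sup>2))) =
      complex_of_real ((1 - r\<^sup>2) * (real m * (s\<^sup>2 / (1 - r\<^sup>2))))"
    by (simp only: of_real_mult of_real_of_nat_eq)
  then show ?thesis unfolding curv tr re .
qed

end

context params begin

lemma contr: "is_contraction (TT m c)"
proof -
  have gb: "\<And>n. cmod (g2 m c n) \<le> 1" using g_bound[OF c0 c1] by simp
  show ?thesis unfolding is_contraction_def TT_def
    using wc_bdd[where p="p2 m" and g="g2 m c", OF p_inj(2) gb] by blast
qed

lemma frank: "finite_rank (defect (TT m c))"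
  unfolding finite_rank_def
proof (intro exI ballI)
  fix x :: vec assume x: "x \<in> l2"
  define cf where "cf i = complex_of_real s * x (int_encode (int i))" for i
  show "defect (TT m c) x = (\<lambda>n. \<Sum>i<m. cf i * unitvec (int_encode (int i)) n)"
  proof (rule ext)
    fix n
    have "(\<Sum>i<m. cf i * unitvec (int_encode (int i)) n) =
        (\<Sum>i<m. if i = nat (int_decode n) \<and> 0 \<le> int_decode n then complex_of_real s * x n else 0)"
    proof (rule sum.cong[OF refl])
      fix i
      have "(n = int_encode (int i)) \<longleftrightarrow> (i = nat (int_decode n) \<and> 0 \<le> int_decode n)"
        by (metis int_decode_inverse int_encode_inverse nat_int of_nat_0_le_iff int_nat_eq)
      then show "cf i * unitvec (int_encode (int i)) n =
          (if i = nat (int_decode n) \<and> 0 \<le> int_decode n then complex_of_real s * x n else 0)"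
        unfolding cf_def unitvec_def by auto
    qed
    also have "\<dots> = (if CC m n then complex_of_real s * x n else 0)"
      unfolding CC_def by (cases "0 \<le> int_decode n") (auto simp: sum.delta' nat_less_iff)
    also have "\<dots> = DD m s x n" unfolding DD_def proj_def by simp
    finally show "defect (TT m c) x n = (\<Sum>i<m. cf i * unitvec (int_encode (int i)) n)"
      using defect_eq[OF x] by simp
  qed
qed

lemma curv_lim:
  assumes m: "0 < m"
  shows "((\<lambda>r. curv_integrand (TT m c) (cis t) r) \<longlongrightarrow> complex_of_real (real m * s\<^sup>2)) (at_left 1)"
proof (rule tendsto_eventually)
  show "\<forall>\<^sub>F r in at_left 1. curv_integrand (TT m c) (cis t) r = complex_of_real (real m * s\<^sup>2)"
  proof (rule eventually_mono)
    show "eventually (\<lambda>x. x \<in> {0<..<1}) (at_left (1::real))" by (rule eventually_at_left_real) simp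
    fix r :: real assume "r \<in> {0<..<1}"
    then show "curv_integrand (TT m c) (cis t) r = complex_of_real (real m * s\<^sup>2)"
      by (intro integrand[OF m]) auto
  qed
qed

lemma curv_def: assumes m: "0 < m" shows "curvature_defined (TT m c)"
  unfolding curvature_defined_def
proof (intro exI conjI ballI)
  show "negligible {}" by simp
  show "(\<lambda>t. complex_of_real (real m * s\<^sup>2)) integrable_on {0..2*pi}" by (rule integrable_const_ivl)
  fix t show "((\<lambda>r. curv_integrand (TT m c) (cis t) r) \<longlongrightarrow> complex_of_real (real m * s\<^sup>2)) (at_left 1)"
    by (rule curv_lim[OF m])
qed

lemma curv_val: assumes m: "0 < m" shows "curvature (TT m c) = complex_of_real (real m * s\<^sup>2)"
proof -
  have "(\<lambda>t. Lim (at_left 1) (\<lambda>r. curv_integrand (TT m c) (cis t) r)) = (\<lambda>t. complex_of_real (real m * s\<^sup>2))"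
    by (intro ext tendsto_Lim curv_lim[OF m]) simp
  then have "curvature (TT m c) = integral {0..2*pi} (\<lambda>t. complex_of_real (real m * s\<^sup>2)) / complex_of_real (2*pi)"
    unfolding curvature_def by simp
  also have "integral {0..2*pi} (\<lambda>t. complex_of_real (real m * s\<^sup>2)) = (2*pi) *\<^sub>R complex_of_real (real m * s\<^sup>2)"
    by (simp add: content_real)
  also have "\<dots> = complex_of_real (2*pi) * complex_of_real (real m * s\<^sup>2)" by (simp only: scaleR_conv_of_real)
  also have "\<dots> / complex_of_real (2*pi) = complex_of_real (real m * s\<^sup>2)"
    by (rule nonzero_mult_div_cancel_left) simp
  finally show ?thesis .
qed

lemma unitvec_norm: "l2norm (unitvec k) = 1"
proof -
  have "(\<Sum>n. (cmod (unitvec k n))\<^sup>2) = (\<Sum>n\<in>{k}. (cmod (unitvec k n))\<^sup>2)"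
    by (rule suminf_finite) (auto simp: unitvec_def)
  then show ?thesis unfolding l2norm_def by (simp add: unitvec_def)
qed

lemma TS_unit: assumes "int_decode j < 0"
  shows "TS m c (unitvec j) = unitvec (int_encode (int_decode j - int m))"
proof (rule ext)
  fix n
  have iff: "p1 m n = j \<longleftrightarrow> n = int_encode (int_decode j - int m)"
    unfolding p1_def by (metis add_diff_cancel_right' diff_add_cancel int_decode_inverse int_encode_inverse)
  show "TS m c (unitvec j) n = unitvec (int_encode (int_decode j - int m)) n"
    unfolding TS_def wc_def unitvec_def iff g1_def using assms by (auto simp: wt_def)
qed

lemma not_pure: "\<not> pure (TT m c)"
proof -
  define h where "h = unitvec (int_encode (-1))"
  have it: "(adj (TT m c) ^^ k) h = unitvec (int_encode (-1 - int k * int m))" for k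
  proof (induction k)
    case 0 then show ?case unfolding h_def by simp
  next
    case (Suc k)
    have "(adj (TT m c) ^^ Suc k) h = adj (TT m c) (unitvec (int_encode (-1 - int k * int m)))"
      using Suc by simp
    also have "\<dots> = TS m c (unitvec (int_encode (-1 - int k * int m)))"
      by (rule adj_TT[OF c0 c1 unitvec_l2])
    also have "\<dots> = unitvec (int_encode (-1 - int k * int m - int m))"
    proof -
      have "0 \<le> int k * int m" by simp
      then have "-1 - int k * int m < 0" by linarith
      then have "int_decode (int_encode (-1 - int k * int m)) < 0" by simp
      then show ?thesis using TS_unit by simp
    qed
    also have "-1 - int k * int m - int m = -1 - int (Suc k) * int m" by (simp add: algebra_simps)
    finally show ?case .
  qed
  have "(\<lambda>k. l2norm ((adj (TT m c) ^^ k) h)) = (\<lambda>k. 1)" unfolding it unitvec_norm ..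
  moreover have "\<not> ((\<lambda>k. 1::real) \<longlonglongrightarrow> 0)" by (simp add: LIMSEQ_const_iff)
  moreover have "h \<in> l2" unfolding h_def by (rule unitvec_l2)
  ultimately show ?thesis unfolding pure_def
  proof -
    assume e: "(\<lambda>k. l2norm ((adj (TT m c) ^^ k) h)) = (\<lambda>k. 1)" and n: "\<not> ((\<lambda>k. 1::real) \<longlonglongrightarrow> 0)" and hl: "h \<in> l2"
    show "\<not> (\<forall>h\<in>l2. (\<lambda>n. l2norm ((adj (TT m c) ^^ n) h)) \<longlonglongrightarrow> 0)"
    proof
      assume "\<forall>h\<in>l2. (\<lambda>n. l2norm ((adj (TT m c) ^^ n) h)) \<longlonglongrightarrow> 0"
      then have "(\<lambda>n. l2norm ((adj (TT m c) ^^ n) h)) \<longlonglongrightarrow> 0" using hl by blast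
      then show False using e n by simp
    qed
  qed
qed

end

lemma exists_T:
  assumes k0: "0 \<le> \<kappa>" and mk: "\<kappa> < real m"
  shows "\<exists>T. is_contraction T \<and> finite_rank (defect T) \<and> \<not> pure T \<and>
                curvature_defined T \<and> curvature T = complex_of_real \<kappa>"
proof -
  have m: "0 < m" using k0 mk by simp
  define s where "s = sqrt (\<kappa> / m)"
  define c where "c = sqrt (1 - \<kappa> / m)"
  have q0: "0 \<le> \<kappa> / m" using k0 by simp
  have q1: "\<kappa> / m \<le> 1" using mk m by simp
  interpret params m c s
    by unfold_locales (use q0 q1 in \<open>auto simp: s_def c_def\<close>)
  have "real m * s\<^sup>2 = \<kappa>" unfolding s_def using q0 m by simp
  then show ?thesis using contr frank not_pure curv_def[OF m] curv_val[OF m] by metis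
qed

theorem mainTheorem10:
  shows "(\<forall>\<kappa>::real. \<kappa> \<ge> 0 \<longrightarrow>
           (\<exists>T. is_contraction T \<and> finite_rank (defect T) \<and>
                curvature_defined T \<and> curvature T = complex_of_real \<kappa>))
       \<and> (\<exists>T. is_contraction T \<and> finite_rank (defect T) \<and> \<not> pure T \<and>
                curvature_defined T \<and> (\<forall>n::int. curvature T \<noteq> of_int n))"
proof (intro conjI allI impI)
  fix \<kappa> :: real assume k: "\<kappa> \<ge> 0"
  have "\<kappa> < real (nat \<lfloor>\<kappa>\<rfloor> + 1)" using k by linarith
  from exists_T[OF k this] show "\<exists>T. is_contraction T \<and> finite_rank (defect T) \<and>
                curvature_defined T \<and> curvature T = complex_of_real \<kappa>" by blast
next
  have "(0::real) \<le> 1/2" "1/2 < real (1::nat)" by simp_all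
  from exists_T[OF this] obtain T where T: "is_contraction T" "finite_rank (defect T)" "\<not> pure T"
     "curvature_defined T" "curvature T = complex_of_real (1/2)" by blast
  have "curvature T \<noteq> of_int n" for n :: int
  proof
    assume "curvature T = of_int n"
    then have "complex_of_real (1/2) = complex_of_real (of_int n)" using T(5) by simp
    then have "(1/2::real) = of_int n" by (simp only: of_real_eq_iff)
    then have "(1::real) = 2 * of_int n" by simp
    then have "(1::int) = 2 * n" by linarith
    then show False by presburger
  qed
  then show "\<exists>T. is_contraction T \<and> finite_rank (defect T) \<and> \<not> pure T \<and>
                curvature_defined T \<and> (\<forall>n::int. curvature T \<noteq> of_int n)" using T by blast
qed

end
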